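(* Let $X$ be a real Banach space, let $n\in\mathbb N$, let $S_1,\dots,S_n$ be $w^*$-slices of $B_{X^*}$ and let $\lambda_1,\dots,\lambda_n\in(0,1]$ with $\sum_{i=1}^n\lambda_i=1$. Put $C:=\sum_{i=1}^n\lambda_i S_i$ and assume $\operatorname{diam}(C)=2$. Then for every $\varepsilon>0$ there exist $f_i,g_i\in S_i$ ($i=1,\dots,n$) and $x\in S_X$ such that $(f_i-g_i)(x)>2-\varepsilon$ for all $i\in\{1,\dots,n\}$; consequently $f_i(x)>1-\varepsilon$ and $g_i(-x)>1-\varepsilon$ for all $i$.
   Context: A $w^*$-slice of $B_{X^*}$ is a set $S(B_{X^*},x,\alpha)=\{f\in B_{X^*}: f(x)>1-\alpha\}$ with $x\in S_X$ and $0<\alpha<1$. $B$, $S$ denote closed unit ball and unit sphere. *)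

theory Defs
  imports "HOL-Analysis.Analysis"
begin

text \<open>The dual space X* is modelled as the type of bounded linear functionals
  ('a, real) blinfun with the operator norm. The closed unit ball of X*.\<close>

definition dual_ball :: "('a::real_normed_vector \<Rightarrow>\<^sub>L real) set" where
  "dual_ball = {f. norm f \<le> 1}"

definition wstar_slice :: "'a::real_normed_vector \<Rightarrow> real \<Rightarrow> ('a \<Rightarrow>\<^sub>L real) set" where
  "wstar_slice x \<alpha> = {f \<in> dual_ball. blinfun_apply f x > 1 - \<alpha>}"

end

theory Submission
  imports Defs
begin

lemma functional_attain:
  fixes \<phi> :: "'a::real_normed_vector \<Rightarrow>\<^sub>L real"
  assumes "norm \<phi> > c" "c \<ge> 0"
  shows "\<exists>z. norm z = 1 \<and> blinfun_apply \<phi> z > c"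
proof (rule ccontr)
  assume H: "\<not> ?thesis"
  have "norm (blinfun_apply \<phi> x) \<le> c * norm x" for x
  proof (cases "x = 0")
    case True then show ?thesis by simp
  next
    case False
    let ?u = "x /\<^sub>R norm x"
    have nu: "norm ?u = 1" "norm (- ?u) = 1" using False by auto
    have "blinfun_apply \<phi> ?u \<le> c" "blinfun_apply \<phi> (- ?u) \<le> c" using H nu by (auto simp: not_less)
    then have "\<bar>blinfun_apply \<phi> ?u\<bar> \<le> c" by (auto simp: blinfun.minus_right)
    then have "\<bar>blinfun_apply \<phi> x\<bar> / norm x \<le> c"
      by (simp add: blinfun.scaleR_right divide_inverse abs_mult mult.commute)
    then show ?thesis using False by (simp add: divide_le_eq)
  qed
  then have "norm \<phi> \<le> c" using assms(2) by (rule norm_blinfun_bound[rotated])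
  with assms(1) show False by simp
qed

theorem mainTheorem2:
  fixes n :: nat
    and x :: "nat \<Rightarrow> 'a::banach"
    and \<alpha> :: "nat \<Rightarrow> real"
    and lam :: "nat \<Rightarrow> real"
    and C :: "('a \<Rightarrow>\<^sub>L real) set"
  assumes x_sphere: "\<forall>i\<in>{1..n}. norm (x i) = 1"
    and alpha_range: "\<forall>i\<in>{1..n}. 0 < \<alpha> i \<and> \<alpha> i < 1"
    and lambda_range: "\<forall>i\<in>{1..n}. 0 < lam i \<and> lam i \<le> 1"
    and lambda_sum: "(\<Sum>i=1..n. lam i) = 1"
    and C_def: "C = {(\<Sum>i=1..n. lam i *\<^sub>R h i) | h. \<forall>i\<in>{1..n}. h i \<in> wstar_slice (x i) (\<alpha> i)}"
    and diam: "diameter C = 2"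
  shows "\<forall>\<epsilon>>0. \<exists>f g :: nat \<Rightarrow> ('a \<Rightarrow>\<^sub>L real). \<exists>z :: 'a. norm z = 1 \<and>
           (\<forall>i\<in>{1..n}. f i \<in> wstar_slice (x i) (\<alpha> i) \<and> g i \<in> wstar_slice (x i) (\<alpha> i) \<and>
              blinfun_apply (f i - g i) z > 2 - \<epsilon> \<and>
              blinfun_apply (f i) z > 1 - \<epsilon> \<and> blinfun_apply (g i) (- z) > 1 - \<epsilon>)"
proof (intro allI impI)
  fix \<epsilon> :: real assume ep: "\<epsilon> > 0"
  have ne: "{1..n} \<noteq> {}" using lambda_sum by (metis empty_iff sum.empty zero_neq_one)
  define m where "m = Min (lam ` {1..n})"
  have mpos: "m > 0" unfolding m_def using ne lambda_range by (subst Min_gr_iff) auto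
  have mle: "m \<le> lam i" if "i \<in> {1..n}" for i unfolding m_def using that by simp
  define \<delta> where "\<delta> = min 1 (\<epsilon> * m)"
  have dpos: "\<delta> > 0" using ep mpos by (simp add: \<delta>_def)
  have dle: "\<delta> \<le> \<epsilon> * lam i" if "i \<in> {1..n}" for i
    using mle[OF that] ep unfolding \<delta>_def by (meson min.coboundedI2 mult_left_mono less_imp_le order_trans)
  have "\<exists>u\<in>C. \<exists>v\<in>C. norm (u - v) > 2 - \<delta>"
  proof (rule ccontr)
    assume "\<not> ?thesis"
    then have "diameter C \<le> 2 - \<delta>" using dpos unfolding \<delta>_def
      by (intro diameter_le) (auto simp: not_less)
    with diam dpos show False by simp
  qed
  then obtain f g where f: "\<forall>i\<in>{1..n}. f i \<in> wstar_slice (x i) (\<alpha> i)"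
    and g: "\<forall>i\<in>{1..n}. g i \<in> wstar_slice (x i) (\<alpha> i)"
    and big: "norm ((\<Sum>i=1..n. lam i *\<^sub>R f i) - (\<Sum>i=1..n. lam i *\<^sub>R g i)) > 2 - \<delta>"
    unfolding C_def by blast
  have "2 - \<delta> \<ge> 0" using dpos unfolding \<delta>_def by simp
  from functional_attain[OF big this] obtain z where z: "norm z = 1"
    and zv: "blinfun_apply ((\<Sum>i=1..n. lam i *\<^sub>R f i) - (\<Sum>i=1..n. lam i *\<^sub>R g i)) z > 2 - \<delta>"
    by blast
  define d where "d i = blinfun_apply (f i) z - blinfun_apply (g i) z" for i
  have sumd: "(\<Sum>i=1..n. lam i * d i) > 2 - \<delta>"
    using zv by (simp add: d_def blinfun.sum_left blinfun.diff_left sum_subtractf right_diff_distrib blinfun.scaleR_left)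
  have bnd1: "\<bar>blinfun_apply h z\<bar> \<le> 1" if "h \<in> wstar_slice y a" for h y a
  proof -
    have "norm h \<le> 1" using that by (simp add: wstar_slice_def dual_ball_def)
    then show ?thesis using norm_blinfun[of h z] z by simp
  qed
  have fb: "\<bar>blinfun_apply (f i) z\<bar> \<le> 1" "\<bar>blinfun_apply (g i) z\<bar> \<le> 1" if "i \<in> {1..n}" for i
    using bnd1 f g that by (meson)+
  have dle2: "d i \<le> 2" if "i \<in> {1..n}" for i using fb[OF that] unfolding d_def by linarith
  have dj: "d j > 2 - \<epsilon>" if j: "j \<in> {1..n}" for j
  proof -
    have e1: "(\<Sum>i=1..n. lam i * d i) = lam j * d j + (\<Sum>i\<in>{1..n}-{j}. lam i * d i)"
      using j by (intro sum.remove) auto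
    have e2: "(\<Sum>i\<in>{1..n}-{j}. lam i * d i) \<le> (\<Sum>i\<in>{1..n}-{j}. lam i * 2)"
      proof (rule sum_mono)
      fix i assume "i \<in> {1..n} - {j}"
      then have "i \<in> {1..n}" by blast
      then show "lam i * d i \<le> lam i * 2" using lambda_range dle2 by (meson less_imp_le mult_left_mono)
    qed
    have e3: "(\<Sum>i\<in>{1..n}-{j}. lam i * 2) = 2 * (1 - lam j)"
    proof -
      have "(\<Sum>i\<in>{1..n}-{j}. lam i) = 1 - lam j" using j lambda_sum by (simp add: sum_diff1)
      then show ?thesis by (simp add: sum_distrib_right[symmetric])
    qed
    have "lam j * d j > 2 * lam j - \<delta>" using sumd e1 e2 e3 by (smt (verit))
    then have "lam j * d j > lam j * (2 - \<epsilon>)" using dle[OF j] by (simp add: algebra_simps)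
    moreover have "lam j > 0" using lambda_range j by blast
    ultimately show ?thesis by simp
  qed
  show "\<exists>f g :: nat \<Rightarrow> ('a \<Rightarrow>\<^sub>L real). \<exists>z :: 'a. norm z = 1 \<and>
           (\<forall>i\<in>{1..n}. f i \<in> wstar_slice (x i) (\<alpha> i) \<and> g i \<in> wstar_slice (x i) (\<alpha> i) \<and>
              blinfun_apply (f i - g i) z > 2 - \<epsilon> \<and>
              blinfun_apply (f i) z > 1 - \<epsilon> \<and> blinfun_apply (g i) (- z) > 1 - \<epsilon>)"
  proof (intro exI conjI ballI)
    show "norm z = 1" by fact
  next
    fix i assume i: "i \<in> {1..n}"
    show "f i \<in> wstar_slice (x i) (\<alpha> i)" "g i \<in> wstar_slice (x i) (\<alpha> i)" using f g i by auto
    show "blinfun_apply (f i - g i) z > 2 - \<epsilon>" using dj[OF i] by (simp add: d_def blinfun.diff_left)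
    show "blinfun_apply (f i) z > 1 - \<epsilon>" using dj[OF i] fb[OF i] unfolding d_def by linarith
    show "blinfun_apply (g i) (- z) > 1 - \<epsilon>" using dj[OF i] fb[OF i] unfolding d_def
      by (simp add: blinfun.minus_right)
  qed
qed

end
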